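(* Let $n$ be a positive integer, let $u:2^{[n]}\to\mathbb{R}_{\ge 0}$ be a normalized ($u(\emptyset)=0$), monotone, submodular and second-order supermodular set function, and let $c:2^{[n]}\to\mathbb{R}_{\ge 0}$ be the modular set function $c(S)=\sum_{i\in S}c_i$ given by positive costs $c_1,\dots,c_n>0$. Fix $\epsilon>0$ and let $\pi$ be a $d$-approximate permutation for the Min-Sum Submodular Cover instance $(u,c)$. Run the local search algorithm described in the context with inputs $\epsilon,u,c,\pi$. If the algorithm does not converge before terminating, then the permutation it returns (after $2n^3\log(d/\epsilon)$ iterations) is a $(4+\epsilon)$-approximation for the Min-Sum Submodular Cover instance $(u,c)$.
   Context: Notation: $[n]=\{1,\dots,n\}$, and $f(e\mid S):=f(S\cup\{e\})-f(S)$. A set function $f$ on $2^{[n]}$ is monotone if $f(S\cup\{i\})\ge f(S)$, submodular if $f(i\mid S)\ge f(i\mid S\cup\{j\})$, and second-order supermodular if $f(i\mid S)-f(i\mid S\cup\{j\})\ge f(i\mid S\cup\{k\})-f(i\mid S\cup\{k,j\})$, each for all $S\subseteq[n]$ and all $i,j,k\in[n]\setminus S$. Min-Sum Submodular Cover: given $u$ and $c$, find a permutation of $[n]$ minimizing $\sum_{i=1}^n c(S_i)\,(u(S_i)-u(S_{i-1}))$, where $S_i$ is the set of the first $i$ elements of the permutation ($S_0=\emptyset$). A permutation is a $d$-approximation if its objective is at most $d$ times the optimum. Local search algorithm (Algorithm 1): input $\epsilon>0$, $u$, $c$, and an initial permutation $\pi$ which is a $d$-approximation. A neighbor of $\pi$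 is a permutation obtained from $\pi$ by removing the element at some position $i$ and reinserting it at some position $j$. The algorithm repeats for at most $2n^3\log(d/\epsilon)$ iterations: compute the neighbor $\pi^*$ of $\pi$ with smallest objective value (keeping $\pi^*=\pi$ unless some neighbor has strictly smaller objective); if $\pi^*=\pi$, the algorithm has converged and returns $\pi$; otherwise set $\pi\gets\pi^*$. If the iteration bound is reached without convergence, it returns the current $\pi$. *)

theory Defs
  imports Complex_Main "HOL-Combinatorics.Multiset_Permutations"
begin

text \<open>Ground set [n] = {1..n}; set functions are functions nat set => real,
  only their values on subsets of {1..n} matter.\<close>

definition marg :: "(nat set \<Rightarrow> real) \<Rightarrow> nat \<Rightarrow> nat set \<Rightarrow> real" where
  "marg f e S = f (S \<union> {e}) - f S"

definition monotone_sf :: "nat \<Rightarrow> (nat set \<Rightarrow> real) \<Rightarrow> bool" where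
  "monotone_sf n f \<longleftrightarrow> (\<forall>S i. S \<subseteq> {1..n} \<and> i \<in> {1..n} - S \<longrightarrow> f (S \<union> {i}) \<ge> f S)"

definition submodular_sf :: "nat \<Rightarrow> (nat set \<Rightarrow> real) \<Rightarrow> bool" where
  "submodular_sf n f \<longleftrightarrow> (\<forall>S i j. S \<subseteq> {1..n} \<and> i \<in> {1..n} - S \<and> j \<in> {1..n} - S
      \<longrightarrow> marg f i S \<ge> marg f i (S \<union> {j}))"

definition second_order_supermodular_sf :: "nat \<Rightarrow> (nat set \<Rightarrow> real) \<Rightarrow> bool" where
  "second_order_supermodular_sf n f \<longleftrightarrow>
     (\<forall>S i j k. S \<subseteq> {1..n} \<and> i \<in> {1..n} - S \<and> j \<in> {1..n} - S \<and> k \<in> {1..n} - S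
      \<longrightarrow> marg f i S - marg f i (S \<union> {j}) \<ge> marg f i (S \<union> {k}) - marg f i (S \<union> {k, j}))"

text \<open>Permutations of [n] are lists; S_i = set (take i p).\<close>

definition perms :: "nat \<Rightarrow> nat list set" where
  "perms n = permutations_of_set {1..n}"

definition mssc_obj :: "(nat set \<Rightarrow> real) \<Rightarrow> (nat set \<Rightarrow> real) \<Rightarrow> nat list \<Rightarrow> real" where
  "mssc_obj u c p = (\<Sum>i = 1..length p. c (set (take i p)) * (u (set (take i p)) - u (set (take (i - 1) p))))"

definition mssc_opt :: "nat \<Rightarrow> (nat set \<Rightarrow> real) \<Rightarrow> (nat set \<Rightarrow> real) \<Rightarrow> real" where
  "mssc_opt n u c = Min (mssc_obj u c ` perms n)"

definition is_approx :: "nat \<Rightarrow> (nat set \<Rightarrow> real) \<Rightarrow> (nat set \<Rightarrow> real) \<Rightarrow> real \<Rightarrow> nat list \<Rightarrow> bool" where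
  "is_approx n u c d p \<longleftrightarrow> p \<in> perms n \<and> mssc_obj u c p \<le> d * mssc_opt n u c"

text \<open>Remove the element at (0-based) position i and reinsert it at position j.\<close>
definition move :: "nat \<Rightarrow> nat \<Rightarrow> 'a list \<Rightarrow> 'a list" where
  "move i j p = (let r = take i p @ drop (Suc i) p in take j r @ [p ! i] @ drop j r)"

definition neighbors :: "'a list \<Rightarrow> 'a list set" where
  "neighbors p = {move i j p | i j. i < length p \<and> j < length p}"

text \<open>One non-converged iteration: q is a neighbor of p of smallest objective, and
  it is strictly better than p (so the algorithm moves to q).\<close>
definition ls_step :: "(nat set \<Rightarrow> real) \<Rightarrow> (nat set \<Rightarrow> real) \<Rightarrow> nat list \<Rightarrow> nat list \<Rightarrow> bool" where
  "ls_step u c p q \<longleftrightarrow> q \<in> neighbors p \<and> (\<forall>q' \<in> neighbors p. mssc_obj u c q \<le> mssc_obj u c q')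
      \<and> mssc_obj u c q < mssc_obj u c p"

definition ls_iters :: "nat \<Rightarrow> real \<Rightarrow> real \<Rightarrow> nat" where
  "ls_iters n d \<epsilon> = nat \<lceil>2 * real n ^ 3 * ln (d / \<epsilon>)\<rceil>"

end

theory Submission
  imports Defs
begin


fun gobj :: "(nat set \<Rightarrow> real) \<Rightarrow> (nat \<Rightarrow> real) \<Rightarrow> real \<Rightarrow> nat set \<Rightarrow> nat list \<Rightarrow> real" where
  "gobj u cc U S [] = 0"
| "gobj u cc U S (x # xs) = cc x * (U - u S) + gobj u cc U (insert x S) xs"

lemma gobj_nth: "gobj u cc U S xs = (\<Sum>j<length xs. cc (xs ! j) * (U - u (S \<union> set (take j xs))))"
proof (induction xs arbitrary: S)
  case Nil then show ?case by simp
next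
  case (Cons x xs)
  show ?case
    unfolding length_Cons sum.lessThan_Suc_shift
    by (simp add: Cons.IH insert_commute)
qed

lemma gobj_append: "gobj u cc U S (xs @ ys) = gobj u cc U S xs + gobj u cc U (S \<union> set xs) ys"
  by (induction xs arbitrary: S) auto

lemma abel: "(\<Sum>j<N. (\<Sum>i<Suc j. a i) * (b (Suc j) - b j)) = (\<Sum>j<N. a j * (b N - b (j::nat)::real))"
proof (induction N)
  case 0 then show ?case by simp
next
  case (Suc N)
  have "(\<Sum>j<Suc N. a j * (b (Suc N) - b j)) = (\<Sum>j<Suc N. a j * (b N - b j)) + (\<Sum>j<Suc N. a j) * (b (Suc N) - b N)"
  proof -
    have "(\<Sum>j<Suc N. a j * (b (Suc N) - b j)) = (\<Sum>j<Suc N. a j * (b N - b j) + a j * (b (Suc N) - b N))"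
      by (rule sum.cong) (simp_all add: algebra_simps)
    also have "\<dots> = (\<Sum>j<Suc N. a j * (b N - b j)) + (\<Sum>j<Suc N. a j) * (b (Suc N) - b N)"
      by (simp only: sum.distrib sum_distrib_right)
    finally show ?thesis .
  qed
  then show ?case using Suc by simp
qed

lemma c_take: "distinct p \<Longrightarrow> m \<le> length p \<Longrightarrow> sum cc (set (take m p)) = (\<Sum>i<m. cc (p ! i))"
proof (induction m)
  case 0 then show ?case by simp
next
  case (Suc m)
  have m: "m < length p" using Suc by simp
  have nin: "p ! m \<notin> set (take m p)"
    using Suc.prems(1) m by (metis distinct_take id_take_nth_drop distinct_append not_distinct_conv_prefix take_Suc_conv_app_nth distinct.simps(2) distinct_append)
  have "set (take (Suc m) p) = insert (p ! m) (set (take m p))"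
    using m by (simp add: take_Suc_conv_app_nth)
  then show ?case using Suc nin by (simp add: add.commute)
qed

lemma obj_delta: "mssc_obj u C p = (\<Sum>j<length p. C (set (take (Suc j) p)) * (u (set (take (Suc j) p)) - u (set (take j p))))"
  unfolding mssc_obj_def by (simp add: sum.atLeast1_atMost_eq)

lemma obj_abel: "distinct p \<Longrightarrow> mssc_obj u (\<lambda>S. sum cc S) p = (\<Sum>j<length p. cc (p ! j) * (u (set p) - u (set (take j p))))"
proof -
  assume d: "distinct p"
  have "mssc_obj u (\<lambda>S. sum cc S) p = (\<Sum>j<length p. (\<Sum>i<Suc j. cc (p ! i)) * (u (set (take (Suc j) p)) - u (set (take j p))))"
    unfolding obj_delta by (intro sum.cong refl) (simp add: c_take[OF d])
  also have "\<dots> = (\<Sum>j<length p. cc (p ! j) * (u (set (take (length p) p)) - u (set (take j p))))"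
    by (rule abel[where b = "\<lambda>i. u (set (take i p))"])
  finally show ?thesis by simp
qed

lemma obj_g: "distinct p \<Longrightarrow> mssc_obj u (\<lambda>S. sum cc S) p = gobj u cc (u (set p)) {} p"
  by (simp add: obj_abel gobj_nth)

lemma move_decomp: "k \<le> P \<Longrightarrow> P < length p \<Longrightarrow> move P k p = take k p @ [p ! P] @ drop k (take P p) @ drop (Suc P) p"
  unfolding move_def Let_def by (simp add: min_def)

lemma p_decomp: "k \<le> P \<Longrightarrow> P < length p \<Longrightarrow> p = take k p @ drop k (take P p) @ [p ! P] @ drop (Suc P) p"
proof -
  assume a: "k \<le> P" "P < length p"
  have "p = take P p @ p ! P # drop (Suc P) p" using a by (simp add: id_take_nth_drop)
  also have "take P p = take k p @ drop k (take P p)" using a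
    by (metis append_take_drop_id min.absorb1 take_take)
  finally show ?thesis by simp
qed

lemma sum_shift_ivl: "(\<Sum>j\<in>{k..<P}. f j) = (\<Sum>j<P - k. f (k + j::nat))"
  by (rule sum.reindex_bij_witness[of _ "\<lambda>j. k + j" "\<lambda>j. j - k"]) (auto simp: le_add_diff_inverse)

lemma move_diff:
  assumes d: "distinct p" and kP: "k \<le> P" and P: "P < length p"
  shows "mssc_obj u (\<lambda>S. sum cc S) p - mssc_obj u (\<lambda>S. sum cc S) (move P k p) =
    (\<Sum>j\<in>{k..<P}. cc (p ! j) * marg u (p ! P) (set (take j p))) - cc (p ! P) * (u (set (take P p)) - u (set (take k p)))"
proof -
  define A where "A = take k p"
  define M where "M = drop k (take P p)"
  define e where "e = p ! P"
  define Z where "Z = drop (Suc P) p"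
  have pd: "p = A @ M @ [e] @ Z" unfolding A_def M_def e_def Z_def using p_decomp[OF kP P] .
  have md: "move P k p = A @ [e] @ M @ Z" unfolding A_def M_def e_def Z_def using move_decomp[OF kP P] .
  have d1: "distinct (A @ M @ [e] @ Z)" using d pd by simp
  have d2: "distinct (move P k p)" using d1 unfolding md by auto
  have s2: "set (move P k p) = set p" unfolding md using arg_cong[OF pd, of set] by auto
  define U where "U = u (set p)"
  have o1: "mssc_obj u (\<lambda>S. sum cc S) p = gobj u cc U {} A + gobj u cc U (set A) M + cc e * (U - u (set A \<union> set M)) + gobj u cc U (set A \<union> set M \<union> {e}) Z"
  proof -
    have "gobj u cc U {} p = gobj u cc U {} (A @ M @ [e] @ Z)" using pd by simp
    also have "\<dots> = gobj u cc U {} A + gobj u cc U (set A) M + cc e * (U - u (set A \<union> set M)) + gobj u cc U (set A \<union> set M \<union> {e}) Z"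
      by (simp add: gobj_append)
    finally show ?thesis unfolding obj_g[OF d] U_def .
  qed
  have o2: "mssc_obj u (\<lambda>S. sum cc S) (move P k p) = gobj u cc U {} A + cc e * (U - u (set A)) + gobj u cc U (insert e (set A)) M + gobj u cc U (set A \<union> set M \<union> {e}) Z"
  proof -
    have "gobj u cc U {} (A @ [e] @ M @ Z) = gobj u cc U {} A + cc e * (U - u (set A)) + gobj u cc U (insert e (set A)) M + gobj u cc U (set A \<union> set M \<union> {e}) Z"
      by (simp add: gobj_append insert_commute)
    moreover have "mssc_obj u (\<lambda>S. sum cc S) (move P k p) = gobj u cc U {} (move P k p)"
      using obj_g[OF d2] s2 U_def by simp
    ultimately show ?thesis using md by simp
  qed
  have lm: "length M = P - k" unfolding M_def using kP P by simp
  have gd: "gobj u cc U (set A) M - gobj u cc U (insert e (set A)) M = (\<Sum>j<P - k. cc (M ! j) * marg u e (set A \<union> set (take j M)))"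
    unfolding gobj_nth lm sum_subtractf[symmetric]
  proof (rule sum.cong[OF refl])
    fix j
    have "insert e (set A) \<union> set (take j M) = (set A \<union> set (take j M)) \<union> {e}" by auto
    then show "cc (M ! j) * (U - u (set A \<union> set (take j M))) - cc (M ! j) * (U - u (insert e (set A) \<union> set (take j M))) =
      cc (M ! j) * marg u e (set A \<union> set (take j M))" unfolding marg_def by (simp add: algebra_simps)
  qed
  have gd2: "(\<Sum>j<P - k. cc (M ! j) * marg u e (set A \<union> set (take j M))) = (\<Sum>j\<in>{k..<P}. cc (p ! j) * marg u e (set (take j p)))"
    unfolding sum_shift_ivl
  proof (rule sum.cong[OF refl])
    fix j assume "j \<in> {..<P - k}"
    then have j: "j < P - k" by simp
    have "M ! j = p ! (k + j)" unfolding M_def using j kP P by simp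
    moreover have "set A \<union> set (take j M) = set (take (k + j) p)"
    proof -
      have "take (k + j) p = A @ take j M"
      proof -
        have 1: "take (k + j) p = take k p @ take j (drop k p)" by (rule take_add)
        have 2: "drop k (take P p) = take (P - k) (drop k p)" by (rule drop_take)
        have 3: "take j (take (P - k) (drop k p)) = take j (drop k p)" using j by (simp add: min_def)
        show ?thesis unfolding A_def M_def 2 3 1 ..
      qed
      then show ?thesis by simp
    qed
    ultimately show "cc (M ! j) * marg u e (set A \<union> set (take j M)) = cc (p ! (k + j)) * marg u e (set (take (k + j) p))" by simp
  qed
  have sAM: "set A \<union> set M = set (take P p)"
  proof -
    have "take P p = A @ M" unfolding A_def M_def using kP by (metis append_take_drop_id min.absorb1 take_take)
    then show ?thesis by simp
  qed
  have "mssc_obj u (\<lambda>S. sum cc S) p - mssc_obj u (\<lambda>S. sum cc S) (move P k p) =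
    (gobj u cc U (set A) M - gobj u cc U (insert e (set A)) M) - cc e * (u (set A \<union> set M) - u (set A))"
    using o1 o2 by (simp add: algebra_simps)
  also have "\<dots> = (\<Sum>j\<in>{k..<P}. cc (p ! j) * marg u e (set (take j p))) - cc e * (u (set (take P p)) - u (set A))"
    using gd gd2 sAM by simp
  finally show ?thesis unfolding e_def A_def .
qed

lemma perms_D: "p \<in> perms n \<Longrightarrow> length p = n \<and> distinct p \<and> set p = {1..n}"
  unfolding perms_def permutations_of_set_def using distinct_card by fastforce

lemma move_perm:
  assumes p: "p \<in> perms n" and i: "i < length p" and j: "j < length p"
  shows "move i j p \<in> perms n"
proof -
  have d: "distinct p" and s: "set p = {1..n}" using perms_D[OF p] by auto
  define r where "r = take i p @ drop (Suc i) p"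
  have pe: "p = take i p @ p ! i # drop (Suc i) p" using i by (simp add: id_take_nth_drop)
  have d1: "distinct (take i p @ p ! i # drop (Suc i) p)" using d pe by metis
  have dr: "distinct r" and nin: "p ! i \<notin> set r"
    using d1 unfolding r_def by auto
  have s1: "set p = set (take i p @ p ! i # drop (Suc i) p)" using pe by metis
  have sr: "set p = insert (p ! i) (set r)" unfolding r_def s1 by auto
  have m: "move i j p = take j r @ [p ! i] @ drop j r" unfolding move_def r_def Let_def by simp
  have "distinct (move i j p)" unfolding m using dr nin set_take_disj_set_drop_if_distinct[OF dr, of j j]
      set_take_subset[of j r] set_drop_subset[of j r] by auto
  moreover have "set (move i j p) = set p" unfolding m sr
    using set_append[of "take j r" "drop j r"] by (simp del: set_append) (simp add: insert_commute)
  ultimately show ?thesis unfolding perms_def permutations_of_set_def using s by simp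
qed

lemma nth_take_mem: "P < j \<Longrightarrow> P < length p \<Longrightarrow> p ! P \<in> set (take j p)"
  by (metis length_take min_less_iff_conj nth_mem nth_take)

lemma image_nth_take: "m \<le> length s \<Longrightarrow> (nth s) ` {..<m} = set (take m s)"
proof (intro set_eqI iffI)
  fix x assume m: "m \<le> length s" and "x \<in> (nth s) ` {..<m}"
  then obtain i where i: "i < m" "x = s ! i" by auto
  then have "x = take m s ! i" by simp
  moreover have "i < length (take m s)" using i m by simp
  ultimately show "x \<in> set (take m s)" by (metis nth_mem)
next
  fix x assume m: "m \<le> length s" and "x \<in> set (take m s)"
  then obtain i where i: "i < length (take m s)" "x = take m s ! i" by (metis in_set_conv_nth)
  then have "x = s ! i" "i < m" by auto
  then show "x \<in> (nth s) ` {..<m}" by auto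
qed

lemma downset:
  assumes "\<forall>q q'. q \<le> q' \<and> q' < n \<longrightarrow> P q' \<longrightarrow> P q"
  shows "\<exists>m\<le>(n::nat). {q. q < n \<and> P q} = {..<m}"
proof (cases "\<forall>q<n. P q")
  case True then show ?thesis by (intro exI[of _ n]) auto
next
  case False
  define m where "m = (LEAST q. q < n \<and> \<not> P q)"
  have ex: "\<exists>q. q < n \<and> \<not> P q" using False by auto
  have mm: "m < n \<and> \<not> P m" unfolding m_def using LeastI_ex[OF ex] .
  have "{q. q < n \<and> P q} = {..<m}"
  proof (intro set_eqI iffI)
    fix x assume "x \<in> {q. q < n \<and> P q}"
    then have x: "x < n" "P x" by auto
    show "x \<in> {..<m}"
    proof (rule ccontr)
      assume "x \<notin> {..<m}"
      then have "m \<le> x" by simp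
      then have "P m" using assms x by (meson order.strict_trans2)
      then show False using mm by simp
    qed
  next
    fix x assume "x \<in> {..<m}"
    then have "x < m" by simp
    then have "\<not> (x < n \<and> \<not> P x)" unfolding m_def by (rule not_less_Least)
    then show "x \<in> {q. q < n \<and> P q}" using \<open>x < m\<close> mm by auto
  qed
  then show ?thesis using mm by (intro exI[of _ m]) auto
qed

lemma upset:
  assumes "\<forall>j j'. j \<le> j' \<and> j' < n \<longrightarrow> P j \<longrightarrow> P j'"
  shows "\<exists>k\<le>(n::nat). {j. j < n \<and> P j} = {k..<n}"
proof -
  have "\<forall>q q'. q \<le> q' \<and> q' < n \<longrightarrow> \<not> P q' \<longrightarrow> \<not> P q" using assms by blast
  from downset[OF this] obtain m where m: "m \<le> n" "{q. q < n \<and> \<not> P q} = {..<m}" by blast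
  have "{j. j < n \<and> P j} = {m..<n}"
  proof (intro set_eqI iffI)
    fix x assume "x \<in> {j. j < n \<and> P j}"
    then have x: "x < n" "P x" by auto
    have "m \<le> x"
    proof (rule ccontr)
      assume "\<not> m \<le> x"
      then have "x \<in> {..<m}" by simp
      then have "x \<in> {q. q < n \<and> \<not> P q}" using m(2) by simp
      then show False using x by simp
    qed
    then show "x \<in> {m..<n}" using x by simp
  next
    fix x assume "x \<in> {m..<n}"
    then have x: "m \<le> x" "x < n" by auto
    have "P x"
    proof (rule ccontr)
      assume "\<not> P x"
      then have "x \<in> {..<m}" using m(2) x by blast
      then show False using x by simp
    qed
    then show "x \<in> {j. j < n \<and> P j}" using x by simp
  qed
  then show ?thesis using m(1) by blast
qed

lemma sum_le_prefix:
  fixes a :: "nat \<Rightarrow> real"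
  assumes a: "\<forall>i<n. 0 \<le> a i" and J: "J \<subseteq> {..<n}" and b: "\<forall>j\<in>J. (\<Sum>i<Suc j. a i) \<le> X" and X: "0 \<le> X"
  shows "sum a J \<le> X"
proof (cases "J = {}")
  case True then show ?thesis using X by simp
next
  case False
  have fin: "finite J" using J finite_subset by blast
  define j0 where "j0 = Max J"
  have j0: "j0 \<in> J" unfolding j0_def using fin False by simp
  have "J \<subseteq> {..<Suc j0}" unfolding j0_def using fin by (auto simp: less_Suc_eq_le)
  have "Suc j0 \<le> n" using j0 J by auto
  then have "sum a J \<le> (\<Sum>i<Suc j0. a i)" using a \<open>J \<subseteq> {..<Suc j0}\<close> by (intro sum_mono2) auto
  also have "\<dots> \<le> X" using b j0 by auto
  finally show ?thesis .
qed

lemma telescope: "m \<le> n \<Longrightarrow> (\<Sum>i\<in>{m..<n}. g (Suc i) - g i) = g n - (g m :: real)"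
  by (rule sum_Suc_diff')

locale LS =
  fixes n :: nat and u :: "nat set \<Rightarrow> real" and cc :: "nat \<Rightarrow> real"
  assumes mono: "monotone_sf n u" and subm: "submodular_sf n u"
    and ccpos: "\<forall>i\<in>{1..n}. cc i > 0"
begin

lemma marg_zero: "e \<in> S \<Longrightarrow> marg u e S = 0"
  unfolding marg_def by (simp add: insert_absorb)

lemma marg_nonneg: "S \<subseteq> {1..n} \<Longrightarrow> e \<in> {1..n} \<Longrightarrow> marg u e S \<ge> 0"
proof (cases "e \<in> S")
  case True then show ?thesis by (simp add: marg_zero)
next
  case False
  assume "S \<subseteq> {1..n}" "e \<in> {1..n}"
  with False mono show ?thesis unfolding monotone_sf_def marg_def by auto
qed

lemma u_mono_aux: "finite F \<Longrightarrow> S \<union> F \<subseteq> {1..n} \<Longrightarrow> u S \<le> u (S \<union> F)"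
proof (induction F rule: finite_induct)
  case empty then show ?case by simp
next
  case (insert x F)
  have "u S \<le> u (S \<union> F)" using insert by auto
  also have "\<dots> \<le> u (S \<union> insert x F)"
  proof (cases "x \<in> S \<union> F")
    case True then show ?thesis by (simp add: insert_absorb)
  next
    case False
    have "u (S \<union> F) \<le> u ((S \<union> F) \<union> {x})"
      using mono False insert.prems unfolding monotone_sf_def by auto
    then show ?thesis by simp
  qed
  finally show ?case .
qed

lemma u_mono: "S \<subseteq> T \<Longrightarrow> T \<subseteq> {1..n} \<Longrightarrow> u S \<le> u T"
proof -
  assume a: "S \<subseteq> T" "T \<subseteq> {1..n}"
  have "finite (T - S)" using a finite_subset by (metis finite_Diff finite_atLeastAtMost)
  moreover have "S \<union> (T - S) = T" using a by auto
  ultimately show ?thesis using u_mono_aux[of "T - S" S] a by auto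
qed

lemma marg_anti_aux: "finite F \<Longrightarrow> S \<union> F \<subseteq> {1..n} \<Longrightarrow> e \<in> {1..n} \<Longrightarrow> marg u e (S \<union> F) \<le> marg u e S"
proof (induction F rule: finite_induct)
  case empty then show ?case by simp
next
  case (insert x F)
  have S: "S \<subseteq> {1..n}" using insert by auto
  show ?case
  proof (cases "e \<in> S \<union> insert x F")
    case True
    then have "marg u e (S \<union> insert x F) = 0" by (simp add: marg_zero)
    then show ?thesis using marg_nonneg[OF S insert.prems(2)] by simp
  next
    case False
    have ih: "marg u e (S \<union> F) \<le> marg u e S" using insert by auto
    have "marg u e ((S \<union> F) \<union> {x}) \<le> marg u e (S \<union> F)"
    proof (cases "x \<in> S \<union> F")
      case True then show ?thesis by (simp add: insert_absorb)
    next
      case False2: False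
      show ?thesis using subm False False2 insert.prems unfolding submodular_sf_def by auto
    qed
    with ih show ?thesis by simp
  qed
qed

lemma marg_anti: "S \<subseteq> T \<Longrightarrow> T \<subseteq> {1..n} \<Longrightarrow> e \<in> {1..n} \<Longrightarrow> marg u e T \<le> marg u e S"
proof -
  assume a: "S \<subseteq> T" "T \<subseteq> {1..n}" "e \<in> {1..n}"
  have "finite (T - S)" using a finite_subset by (metis finite_Diff finite_atLeastAtMost)
  moreover have "S \<union> (T - S) = T" using a by auto
  ultimately show ?thesis using marg_anti_aux[of "T - S" S e] a by auto
qed

lemma sum_marg: "finite Q \<Longrightarrow> S \<subseteq> {1..n} \<Longrightarrow> g ` Q \<subseteq> {1..n} \<Longrightarrow>
   u (S \<union> g ` Q) - u S \<le> (\<Sum>q\<in>Q. marg u (g q) S)"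
proof (induction Q rule: finite_induct)
  case empty then show ?case by simp
next
  case (insert x Q)
  have ih: "u (S \<union> g ` Q) - u S \<le> (\<Sum>q\<in>Q. marg u (g q) S)" using insert by auto
  have gx: "g x \<in> {1..n}" using insert by auto
  have sub: "S \<union> g ` Q \<subseteq> {1..n}" using insert by auto
  have "u (S \<union> g ` insert x Q) - u (S \<union> g ` Q) = marg u (g x) (S \<union> g ` Q)"
    unfolding marg_def by (simp add: Un_commute Un_left_commute insert_commute)
  also have "\<dots> \<le> marg u (g x) S" using marg_anti[OF _ sub gx] by auto
  finally show ?case using ih insert by simp
qed

lemma main:
  assumes p: "p \<in> perms n" and sg: "\<sigma> \<in> perms n"
    and D: "\<forall>p'\<in>neighbors p. mssc_obj u (sum cc) p - mssc_obj u (sum cc) p' \<le> D"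
  shows "mssc_obj u (sum cc) p \<le> 4 * mssc_obj u (sum cc) \<sigma> + 2 * real n * D"
proof -
  have lp: "length p = n" and dp: "distinct p" and sp: "set p = {1..n}" using perms_D[OF p] by auto
  have ls: "length \<sigma> = n" and ds: "distinct \<sigma>" and ss: "set \<sigma> = {1..n}" using perms_D[OF sg] by auto
  define U where "U = u {1..n}"
  define a where "a j = cc (p ! j)" for j
  define S where "S j = set (take j p)" for j
  define t where "t j = sum cc (set (take (Suc j) p))" for j
  define \<delta> where "\<delta> j = u (S (Suc j)) - u (S j)" for j
  define b where "b q = cc (\<sigma> ! q)" for q
  define T where "T q = sum cc (set (take (Suc q) \<sigma>))" for q
  define \<delta>s where "\<delta>s q = u (set (take (Suc q) \<sigma>)) - u (set (take q \<sigma>))" for q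
  define F where "F = mssc_obj u (sum cc) p"
  define Opt where "Opt = mssc_obj u (sum cc) \<sigma>"
  have apos: "\<forall>i<n. 0 < a i" unfolding a_def using ccpos sp lp nth_mem by blast
  have bpos: "\<forall>i<n. 0 < b i" unfolding b_def using ccpos ss ls nth_mem by blast
  have t_eq: "t j = (\<Sum>i<Suc j. a i)" if "j < n" for j
    unfolding t_def a_def using c_take[OF dp, of "Suc j"] that lp by simp
  have T_eq: "T j = (\<Sum>i<Suc j. b i)" if "j < n" for j
    unfolding T_def b_def using c_take[OF ds, of "Suc j"] that ls by simp
  have t_mono: "t j \<le> t j'" if "j \<le> j'" "j' < n" for j j'
  proof -
    have "t j = (\<Sum>i<Suc j. a i)" using that by (intro t_eq) simp
    also have "\<dots> \<le> (\<Sum>i<Suc j'. a i)" using that apos by (intro sum_mono2) (auto intro: less_imp_le)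
    finally show ?thesis using t_eq[OF that(2)] by simp
  qed
  have T_mono: "T j \<le> T j'" if "j \<le> j'" "j' < n" for j j'
  proof -
    have "T j = (\<Sum>i<Suc j. b i)" using that by (intro T_eq) simp
    also have "\<dots> \<le> (\<Sum>i<Suc j'. b i)" using that bpos by (intro sum_mono2) (auto intro: less_imp_le)
    finally show ?thesis using T_eq[OF that(2)] by simp
  qed
  have S_sub: "S j \<subseteq> {1..n}" for j unfolding S_def using sp set_take_subset[of j p] by simp
  have Sn: "u (S n) = U" unfolding S_def U_def using lp sp by (metis take_all order.refl)
  have \<delta>_nonneg: "0 \<le> \<delta> j" for j
  proof -
    have "S j \<subseteq> S (Suc j)" unfolding S_def by (rule set_take_subset_set_take) simp
    from u_mono[OF this S_sub] show ?thesis unfolding \<delta>_def by simp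
  qed
  have \<delta>s_nonneg: "0 \<le> \<delta>s q" for q
  proof -
    have 1: "set (take q \<sigma>) \<subseteq> set (take (Suc q) \<sigma>)" by (rule set_take_subset_set_take) simp
    have 2: "set (take (Suc q) \<sigma>) \<subseteq> {1..n}" using ss set_take_subset[of "Suc q" \<sigma>] by simp
    from u_mono[OF 1 2] show ?thesis unfolding \<delta>s_def by simp
  qed
  have F1: "F = (\<Sum>j<n. t j * \<delta> j)" unfolding F_def obj_delta t_def \<delta>_def S_def lp ..
  have F2: "F = (\<Sum>j<n. a j * (U - u (S j)))" unfolding F_def obj_abel[OF dp] a_def S_def U_def lp sp ..
  have O1: "Opt = (\<Sum>q<n. T q * \<delta>s q)" unfolding Opt_def obj_delta T_def \<delta>s_def ls ..
  define X where "X = (\<Sum>j<n. \<Sum>q<n. if 2 * T q \<le> t j then a j * marg u (\<sigma> ! q) (S j) else 0)"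
  define Y where "Y = (\<Sum>j<n. \<Sum>q<n. if 2 * T q \<le> t j then 0 else a j * \<delta>s q)"
  have lower: "F - Y \<le> X"
  proof -
    have "F - Y = (\<Sum>j<n. a j * (U - u (S j)) - (\<Sum>q<n. if 2 * T q \<le> t j then 0 else a j * \<delta>s q))"
      unfolding F2 Y_def sum_subtractf ..
    also have "\<dots> \<le> X" unfolding X_def
    proof (rule sum_mono)
      fix j assume "j \<in> {..<n}"
      then have j: "j < n" by simp
      have "\<forall>q q'. q \<le> q' \<and> q' < n \<longrightarrow> 2 * T q' \<le> t j \<longrightarrow> 2 * T q \<le> t j"
      proof (intro allI impI)
        fix q q' assume h: "q \<le> q' \<and> q' < n" "2 * T q' \<le> t j"
        then have "T q \<le> T q'" using T_mono by blast
        with h(2) show "2 * T q \<le> t j" by linarith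
      qed
      from downset[OF this] obtain m where m: "m \<le> n" "{q. q < n \<and> 2 * T q \<le> t j} = {..<m}" by blast
      have mm: "(x < n \<and> 2 * T x \<le> t j) \<longleftrightarrow> x < m" for x
      proof -
        have "x \<in> {q. q < n \<and> 2 * T q \<le> t j} \<longleftrightarrow> x \<in> {..<m}" unfolding m(2) ..
        then show ?thesis by simp
      qed
      have c1: "{q \<in> {..<n}. \<not> 2 * T q \<le> t j} = {m..<n}"
      proof (intro set_eqI iffI)
        fix x assume "x \<in> {q \<in> {..<n}. \<not> 2 * T q \<le> t j}"
        then have x: "x < n" "\<not> 2 * T x \<le> t j" by auto
        then have "\<not> x < m" using mm[of x] by blast
        then show "x \<in> {m..<n}" using x by simp
      next
        fix x assume "x \<in> {m..<n}"
        then have x: "m \<le> x" "x < n" by auto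
        then have "\<not> 2 * T x \<le> t j" using mm[of x] by auto
        then show "x \<in> {q \<in> {..<n}. \<not> 2 * T q \<le> t j}" using x by simp
      qed
      have c2: "{q \<in> {..<n}. 2 * T q \<le> t j} = {..<m}"
      proof (intro set_eqI iffI)
        fix x assume "x \<in> {q \<in> {..<n}. 2 * T q \<le> t j}"
        then have x: "x < n" "2 * T x \<le> t j" by auto
        then show "x \<in> {..<m}" using mm[of x] by simp
      next
        fix x assume "x \<in> {..<m}"
        then have x: "x < m" by auto
        then have "x < n \<and> 2 * T x \<le> t j" using mm[of x] by auto
        then show "x \<in> {q \<in> {..<n}. 2 * T q \<le> t j}" by simp
      qed
      have e1: "(\<Sum>q<n. if 2 * T q \<le> t j then 0 else a j * \<delta>s q) = a j * (\<Sum>q\<in>{m..<n}. \<delta>s q)"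
      proof -
        have "(\<Sum>q<n. if 2 * T q \<le> t j then 0 else a j * \<delta>s q) = (\<Sum>q<n. if \<not> 2 * T q \<le> t j then a j * \<delta>s q else 0)"
          by (rule sum.cong) auto
        also have "\<dots> = (\<Sum>q\<in>{q \<in> {..<n}. \<not> 2 * T q \<le> t j}. a j * \<delta>s q)" by (rule sum.inter_filter[symmetric]) simp
        finally show ?thesis unfolding c1 sum_distrib_left .
      qed
      have e2: "(\<Sum>q\<in>{m..<n}. \<delta>s q) = U - u (set (take m \<sigma>))"
      proof -
        have "(\<Sum>q\<in>{m..<n}. \<delta>s q) = u (set (take n \<sigma>)) - u (set (take m \<sigma>))"
          unfolding \<delta>s_def by (rule telescope[OF m(1)])
        then show ?thesis using ls ss U_def by simp
      qed
      have e3: "(\<Sum>q<n. if 2 * T q \<le> t j then a j * marg u (\<sigma> ! q) (S j) else 0) = a j * (\<Sum>q<m. marg u (\<sigma> ! q) (S j))"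
      proof -
        have "(\<Sum>q<n. if 2 * T q \<le> t j then a j * marg u (\<sigma> ! q) (S j) else 0) = (\<Sum>q\<in>{q \<in> {..<n}. 2 * T q \<le> t j}. a j * marg u (\<sigma> ! q) (S j))"
          by (rule sum.inter_filter[symmetric]) simp
        then show ?thesis unfolding c2 sum_distrib_left .
      qed
      have im: "(nth \<sigma>) ` {..<m} = set (take m \<sigma>)" using image_nth_take[of m \<sigma>] m ls by simp
      have imsub: "(nth \<sigma>) ` {..<m} \<subseteq> {1..n}" unfolding im using ss set_take_subset[of m \<sigma>] by simp
      have e4: "u (S j \<union> set (take m \<sigma>)) - u (S j) \<le> (\<Sum>q<m. marg u (\<sigma> ! q) (S j))"
        using sum_marg[of "{..<m}" "S j" "nth \<sigma>", OF _ S_sub imsub] unfolding im by simp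
      have e5: "u (set (take m \<sigma>)) \<le> u (S j \<union> set (take m \<sigma>))"
        using u_mono[of "set (take m \<sigma>)" "S j \<union> set (take m \<sigma>)"] S_sub imsub unfolding im by auto
      have "a j * (U - u (S j)) - a j * (U - u (set (take m \<sigma>))) = a j * (u (set (take m \<sigma>)) - u (S j))"
        by (simp add: algebra_simps)
      also have "\<dots> \<le> a j * (\<Sum>q<m. marg u (\<sigma> ! q) (S j))"
        using apos j e4 e5 by (intro mult_left_mono) auto
      finally show "a j * (U - u (S j)) - (\<Sum>q<n. if 2 * T q \<le> t j then 0 else a j * \<delta>s q)
          \<le> (\<Sum>q<n. if 2 * T q \<le> t j then a j * marg u (\<sigma> ! q) (S j) else 0)"
        unfolding e1 e2 e3 .
    qed
    finally show ?thesis .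
  qed
  have Ybound: "Y \<le> 2 * Opt"
  proof -
    have "Y = (\<Sum>q<n. \<Sum>j<n. if 2 * T q \<le> t j then 0 else a j * \<delta>s q)"
      unfolding Y_def by (rule sum.swap)
    also have "\<dots> \<le> (\<Sum>q<n. \<delta>s q * (2 * T q))"
    proof (rule sum_mono)
      fix q assume "q \<in> {..<n}"
      then have q: "q < n" by simp
      define J where "J = {j \<in> {..<n}. \<not> 2 * T q \<le> t j}"
      have "(\<Sum>j<n. if 2 * T q \<le> t j then 0 else a j * \<delta>s q) = (\<Sum>j<n. if \<not> 2 * T q \<le> t j then a j * \<delta>s q else 0)"
        by (rule sum.cong) auto
      also have "\<dots> = (\<Sum>j\<in>J. a j * \<delta>s q)" unfolding J_def by (rule sum.inter_filter[symmetric]) simp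
      also have "\<dots> = \<delta>s q * sum a J" by (simp add: sum_distrib_left mult.commute)
      also have "\<dots> \<le> \<delta>s q * (2 * T q)"
      proof (rule mult_left_mono[OF _ \<delta>s_nonneg])
        have T0: "0 \<le> T q" unfolding T_eq[OF q] using bpos q by (intro sum_nonneg) (auto intro: less_imp_le)
        show "sum a J \<le> 2 * T q"
          by (rule sum_le_prefix[of n]) (use apos T0 t_eq in \<open>auto simp: J_def intro: less_imp_le\<close>)
      qed
      finally show "(\<Sum>j<n. if 2 * T q \<le> t j then 0 else a j * \<delta>s q) \<le> \<delta>s q * (2 * T q)" .
    qed
    also have "\<dots> = 2 * Opt" unfolding O1 sum_distrib_left by (rule sum.cong) auto
    finally show ?thesis .
  qed
  have PQ: "(\<Sum>j<n. if 2 * T q \<le> t j then a j * marg u (\<sigma> ! q) (S j) else 0) \<le> D + b q * (\<Sum>i<n. if 2 * T q \<le> t i then \<delta> i else 0)"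
    if q: "q < n" for q
  proof -
    have D0: "0 \<le> D"
    proof -
      have n0: "0 < length p" using lp q by simp
      have "move 0 0 p \<in> neighbors p" unfolding neighbors_def using n0 by blast
      moreover have "F - mssc_obj u (sum cc) (move 0 0 p) = 0"
        using move_diff[OF dp order.refl n0, where u=u and cc=cc] unfolding F_def by simp
      ultimately show ?thesis using D unfolding F_def by fastforce
    qed
    define e where "e = \<sigma> ! q"
    have e_in: "e \<in> set p" unfolding e_def sp ss[symmetric] using q ls by simp
    obtain P where P: "P < n" "p ! P = e" using e_in lp by (metis in_set_conv_nth)
    have upc: "\<forall>j j'. j \<le> j' \<and> j' < n \<longrightarrow> 2 * T q \<le> t j \<longrightarrow> 2 * T q \<le> t j'"
    proof (intro allI impI)
      fix j j' assume h: "j \<le> j' \<and> j' < n" "2 * T q \<le> t j"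
      then have "t j \<le> t j'" using t_mono by blast
      with h(2) show "2 * T q \<le> t j'" by linarith
    qed
    from upset[OF upc] obtain k where k: "k \<le> n" "{j. j < n \<and> 2 * T q \<le> t j} = {k..<n}" by blast
    have kk: "(j < n \<and> 2 * T q \<le> t j) \<longleftrightarrow> (k \<le> j \<and> j < n)" for j
    proof -
      have "j \<in> {j. j < n \<and> 2 * T q \<le> t j} \<longleftrightarrow> j \<in> {k..<n}" unfolding k(2) ..
      then show ?thesis by simp
    qed
    have fk: "{j \<in> {..<n}. 2 * T q \<le> t j} = {k..<n}"
    proof (intro set_eqI)
      fix x show "x \<in> {j \<in> {..<n}. 2 * T q \<le> t j} \<longleftrightarrow> x \<in> {k..<n}" using kk[of x] by simp
    qed
    have L: "(\<Sum>j<n. if 2 * T q \<le> t j then a j * marg u e (S j) else 0) = (\<Sum>j\<in>{k..<n}. a j * marg u e (S j))"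
      by (subst fk[symmetric]) (rule sum.inter_filter[symmetric], simp)
    have R: "(\<Sum>i<n. if 2 * T q \<le> t i then \<delta> i else 0) = U - u (S k)"
    proof -
      have "(\<Sum>i<n. if 2 * T q \<le> t i then \<delta> i else 0) = (\<Sum>i\<in>{k..<n}. \<delta> i)"
        by (subst fk[symmetric]) (rule sum.inter_filter[symmetric], simp)
      also have "\<dots> = u (S n) - u (S k)" unfolding \<delta>_def by (rule telescope[OF k(1)])
      finally show ?thesis using Sn by simp
    qed
    have Uk: "u (S k) \<le> U" unfolding U_def using u_mono[OF S_sub order.refl] .
    have ce: "b q = cc e" "0 < cc e" using bpos q unfolding b_def e_def by auto
    have zero: "marg u e (S j) = 0" if "P < j" for j
      using marg_zero nth_take_mem[OF that, of p] P lp unfolding S_def by simp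
    show ?thesis
    proof (cases "k \<le> P")
      case True
      have kl: "k < length p" "P < length p" using True P lp by auto
      have nb: "move P k p \<in> neighbors p" unfolding neighbors_def using kl by blast
      have mv: "F - mssc_obj u (sum cc) (move P k p) = (\<Sum>j\<in>{k..<P}. a j * marg u e (S j)) - cc e * (u (S P) - u (S k))"
        using move_diff[OF dp True kl(2), where u=u and cc=cc] P unfolding F_def a_def S_def by simp
      have Dm: "F - mssc_obj u (sum cc) (move P k p) \<le> D" using D nb unfolding F_def by blast
      have sP: "S (Suc P) = S P \<union> {e}" unfolding S_def using P lp by (simp add: take_Suc_conv_app_nth)
      have aP: "a P * marg u e (S P) = cc e * (u (S (Suc P)) - u (S P))"
        unfolding a_def P(2) marg_def sP ..
      have UP: "u (S (Suc P)) \<le> U" unfolding U_def using u_mono[OF S_sub order.refl] .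
      have split: "(\<Sum>j\<in>{k..<n}. a j * marg u e (S j)) = (\<Sum>j\<in>{k..<P}. a j * marg u e (S j)) + a P * marg u e (S P) + (\<Sum>j\<in>{Suc P..<n}. a j * marg u e (S j))"
      proof -
        let ?g = "\<lambda>j. a j * marg u e (S j)"
        have s1: "sum ?g {k..<n} = sum ?g {k..<P} + sum ?g {P..<n}"
          by (rule sum.atLeastLessThan_concat[symmetric]) (use True P in auto)
        have s2: "sum ?g {P..<n} = ?g P + sum ?g {Suc P..<n}"
          by (rule sum.atLeast_Suc_lessThan) (use P in auto)
        show ?thesis unfolding s1 s2 by simp
      qed
      have z: "(\<Sum>j\<in>{Suc P..<n}. a j * marg u e (S j)) = 0" using zero by (intro sum.neutral) auto
      have "(\<Sum>j\<in>{k..<n}. a j * marg u e (S j)) = (F - mssc_obj u (sum cc) (move P k p)) + cc e * (u (S (Suc P)) - u (S k))"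
        unfolding split z mv aP by (simp add: algebra_simps)
      also have "\<dots> \<le> D + cc e * (U - u (S k))"
        using Dm UP ce(2) by (intro add_mono mult_left_mono) auto
      finally show ?thesis unfolding L R e_def[symmetric] ce(1) .
    next
      case False
      have "(\<Sum>j\<in>{k..<n}. a j * marg u e (S j)) = 0" using zero False by (intro sum.neutral) auto
      moreover have "0 \<le> D + cc e * (U - u (S k))" using D0 Uk ce(2) by (intro add_nonneg_nonneg mult_nonneg_nonneg) auto
      ultimately show ?thesis unfolding L R e_def[symmetric] ce(1) by simp
    qed
  qed
  have upper: "X \<le> real n * D + F / 2"
  proof -
    have "X = (\<Sum>q<n. \<Sum>j<n. if 2 * T q \<le> t j then a j * marg u (\<sigma> ! q) (S j) else 0)"
      unfolding X_def by (rule sum.swap)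
    also have "\<dots> \<le> (\<Sum>q<n. D + b q * (\<Sum>i<n. if 2 * T q \<le> t i then \<delta> i else 0))"
      using PQ by (intro sum_mono) auto
    also have "\<dots> = real n * D + (\<Sum>q<n. \<Sum>i<n. if 2 * T q \<le> t i then b q * \<delta> i else 0)"
    proof -
      have "(\<Sum>q<n. D + b q * (\<Sum>i<n. if 2 * T q \<le> t i then \<delta> i else 0)) = (\<Sum>q<n. D) + (\<Sum>q<n. b q * (\<Sum>i<n. if 2 * T q \<le> t i then \<delta> i else 0))"
        by (rule sum.distrib)
      also have "(\<Sum>q<n. b q * (\<Sum>i<n. if 2 * T q \<le> t i then \<delta> i else 0)) = (\<Sum>q<n. \<Sum>i<n. if 2 * T q \<le> t i then b q * \<delta> i else 0)"
        unfolding sum_distrib_left by (intro sum.cong refl) simp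
      finally show ?thesis by simp
    qed
    also have "(\<Sum>q<n. \<Sum>i<n. if 2 * T q \<le> t i then b q * \<delta> i else 0) = (\<Sum>i<n. \<Sum>q<n. if 2 * T q \<le> t i then b q * \<delta> i else 0)"
      by (rule sum.swap)
    also have "\<dots> \<le> (\<Sum>i<n. t i * \<delta> i / 2)"
    proof (rule sum_mono)
      fix i assume "i \<in> {..<n}"
      then have i: "i < n" by simp
      define J where "J = {q \<in> {..<n}. 2 * T q \<le> t i}"
      have "(\<Sum>q<n. if 2 * T q \<le> t i then b q * \<delta> i else 0) = (\<Sum>q\<in>J. b q * \<delta> i)"
        unfolding J_def by (rule sum.inter_filter[symmetric]) simp
      also have "\<dots> = \<delta> i * sum b J" by (simp add: sum_distrib_left mult.commute)
      also have "\<dots> \<le> \<delta> i * (t i / 2)"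
      proof (rule mult_left_mono[OF _ \<delta>_nonneg])
        have t0: "0 \<le> t i" unfolding t_eq[OF i] using apos i by (intro sum_nonneg) (auto intro: less_imp_le)
        show "sum b J \<le> t i / 2"
          by (rule sum_le_prefix[of n]) (use bpos t0 T_eq in \<open>auto simp: J_def intro: less_imp_le\<close>)
      qed
      finally show "(\<Sum>q<n. if 2 * T q \<le> t i then b q * \<delta> i else 0) \<le> t i * \<delta> i / 2" by (simp add: algebra_simps)
    qed
    also have "\<dots> = F / 2" unfolding F1 by (simp add: sum_divide_distrib)
    finally show ?thesis by simp
  qed
  show ?thesis using lower Ybound upper unfolding F_def[symmetric] Opt_def[symmetric] by linarith
qed

end

lemma (in LS) obj_nonneg: "p \<in> perms n \<Longrightarrow> 0 \<le> mssc_obj u (sum cc) p"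
proof -
  assume p: "p \<in> perms n"
  have lp: "length p = n" and dp: "distinct p" and sp: "set p = {1..n}" using perms_D[OF p] by auto
  have "mssc_obj u (sum cc) p = (\<Sum>j<length p. cc (p ! j) * (u (set p) - u (set (take j p))))"
    using obj_abel[OF dp] by simp
  also have "\<dots> \<ge> 0"
  proof (rule sum_nonneg)
    fix j assume "j \<in> {..<length p}"
    then have "p ! j \<in> {1..n}" using sp nth_mem by blast
    then have "0 < cc (p ! j)" using ccpos by blast
    moreover have "u (set (take j p)) \<le> u (set p)" using u_mono[OF set_take_subset[of j p]] sp by simp
    ultimately show "0 \<le> cc (p ! j) * (u (set p) - u (set (take j p)))" by simp
  qed
  finally show ?thesis .
qed

lemma neighbors_perm: "p \<in> perms n \<Longrightarrow> p' \<in> neighbors p \<Longrightarrow> p' \<in> perms n"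
  unfolding neighbors_def using move_perm by blast

lemma qpow_bound:
  fixes d \<epsilon> :: real
  assumes n: "n > 0" and e: "\<epsilon> > 0" and de: "d > \<epsilon>"
  shows "(1 - 1 / (2 * real n)) ^ (ls_iters n d \<epsilon>) * d \<le> \<epsilon>"
proof -
  define K where "K = ls_iters n d \<epsilon>"
  define x where "x = ln (d / \<epsilon>)"
  have d0: "d > 0" using e de by simp
  have x0: "x > 0" unfolding x_def using e de by simp
  have K: "2 * real n ^ 3 * x \<le> real K" unfolding K_def ls_iters_def x_def by (rule real_nat_ceiling_ge)
  have n1: "real n \<ge> 1" using n by simp
  have q0: "0 \<le> 1 - 1 / (2 * real n)" using n1 by (simp add: field_simps)
  have "1 - 1 / (2 * real n) \<le> exp (- (1 / (2 * real n)))" by (rule exp_minus_ge)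
  then have "(1 - 1 / (2 * real n)) ^ K \<le> exp (- (1 / (2 * real n))) ^ K" using q0 by (rule power_mono)
  also have "\<dots> = exp (- (1 / (2 * real n)) * real K)" by (rule exp_of_nat2_mult[symmetric])
  also have "\<dots> \<le> exp (- x)"
  proof -
    have "real n ^ 2 * x \<le> real K / (2 * real n)"
    proof -
      have "real n ^ 2 * x = 2 * real n ^ 3 * x / (2 * real n)" using n1 by (simp add: field_simps power3_eq_cube power2_eq_square)
      also have "\<dots> \<le> real K / (2 * real n)" using K n1 by (intro divide_right_mono) auto
      finally show ?thesis .
    qed
    moreover have "x \<le> real n ^ 2 * x" using n1 x0 by (simp add: power2_eq_square) (metis mult_le_cancel_right1 one_le_power less_le_not_le power2_eq_square mult_mono n1 order_trans  zero_le_one)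
    ultimately have "x \<le> real K / (2 * real n)" by linarith
    then show ?thesis by simp
  qed
  also have "\<dots> = \<epsilon> / d" unfolding x_def using e d0 by (simp add: exp_minus exp_ln)
  finally have "(1 - 1 / (2 * real n)) ^ K \<le> \<epsilon> / d" .
  then have "(1 - 1 / (2 * real n)) ^ K * d \<le> \<epsilon> / d * d" using d0 by (intro mult_right_mono) auto
  then show ?thesis unfolding K_def using d0 by simp
qed

theorem theorem2:
  fixes n :: nat and u :: "nat set \<Rightarrow> real" and cc :: "nat \<Rightarrow> real"
    and \<epsilon> d :: real and \<pi> :: "nat list" and run :: "nat \<Rightarrow> nat list"
  defines "c \<equiv> (\<lambda>S. \<Sum>i\<in>S. cc i)"
  assumes "n > 0"
    and "\<forall>S \<subseteq> {1..n}. u S \<ge> 0"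
    and "u {} = 0"
    and "monotone_sf n u"
    and "submodular_sf n u"
    and "second_order_supermodular_sf n u"
    and "\<forall>i \<in> {1..n}. cc i > 0"
    and "\<epsilon> > 0"
    and "is_approx n u c d \<pi>"
    and "run 0 = \<pi>"
    and "\<forall>k < ls_iters n d \<epsilon>. ls_step u c (run k) (run (Suc k))"
  shows "is_approx n u c (4 + \<epsilon>) (run (ls_iters n d \<epsilon>))"
proof -
  note as = assms(2-)
  interpret LS n u cc using as(4,5,7) by unfold_locales
  have ceq: "c = sum cc" unfolding c_def by (rule ext) simp
  define f where "f = mssc_obj u (sum cc)"
  define K where "K = ls_iters n d \<epsilon>"
  define OPT where "OPT = mssc_opt n u c"
  define q where "q = 1 - 1 / (2 * real n)"
  have fin: "finite (f ` perms n)" unfolding perms_def by simp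
  have ne: "f ` perms n \<noteq> {}" unfolding perms_def by (simp add: permutations_of_set_empty_iff)
  have OPT_eq: "OPT = Min (f ` perms n)" unfolding OPT_def mssc_opt_def ceq f_def ..
  obtain \<sigma> where sg: "\<sigma> \<in> perms n" "f \<sigma> = OPT" using Min_in[OF fin ne] unfolding OPT_eq by auto
  have OPT_le: "OPT \<le> f x" if "x \<in> perms n" for x using Min_le[OF fin] that unfolding OPT_eq by auto
  have OPT0: "0 \<le> OPT" using obj_nonneg[OF sg(1)] sg(2) unfolding f_def by simp
  have pi: "\<pi> \<in> perms n" "f \<pi> \<le> d * OPT" using as(9) unfolding is_approx_def OPT_def f_def ceq by auto
  have n1: "real n \<ge> 1" using as(1) by simp
  have q0: "0 \<le> q" "q \<le> 1" unfolding q_def using n1 by (auto simp: field_simps)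
  have step: "run k \<in> perms n \<and> f (run k) - 4 * OPT \<le> q ^ k * (f \<pi> - 4 * OPT)" if "k \<le> K" for k
    using that
  proof (induction k)
    case 0 then show ?case using pi as(10) by simp
  next
    case (Suc k)
    then have k: "k < K" and IH: "run k \<in> perms n" "f (run k) - 4 * OPT \<le> q ^ k * (f \<pi> - 4 * OPT)" by auto
    have ls: "ls_step u c (run k) (run (Suc k))" using as(11) k unfolding K_def by blast
    then have nb: "run (Suc k) \<in> neighbors (run k)" and mn: "\<forall>q'\<in>neighbors (run k). f (run (Suc k)) \<le> f q'"
      unfolding ls_step_def ceq f_def by auto
    have rp: "run (Suc k) \<in> perms n" using neighbors_perm[OF IH(1) nb] .
    have "\<forall>p'\<in>neighbors (run k). mssc_obj u (sum cc) (run k) - mssc_obj u (sum cc) p' \<le> f (run k) - f (run (Suc k))"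
      using mn unfolding f_def by force
    from main[OF IH(1) sg(1) this] have mainr: "f (run k) \<le> 4 * OPT + 2 * real n * (f (run k) - f (run (Suc k)))"
      using sg(2) unfolding f_def by simp
    have "f (run (Suc k)) - 4 * OPT \<le> q * (f (run k) - 4 * OPT)"
    proof -
      have "2 * real n * (f (run (Suc k)) - 4 * OPT) \<le> (2 * real n - 1) * (f (run k) - 4 * OPT)"
        using mainr by (simp add: algebra_simps)
      then have "f (run (Suc k)) - 4 * OPT \<le> (2 * real n - 1) * (f (run k) - 4 * OPT) / (2 * real n)"
        using n1 by (simp add: field_simps)
      also have "\<dots> = q * (f (run k) - 4 * OPT)" unfolding q_def using n1 by (simp add: field_simps)
      finally show ?thesis .
    qed
    also have "\<dots> \<le> q * (q ^ k * (f \<pi> - 4 * OPT))" using IH(2) q0(1) by (rule mult_left_mono)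
    finally show ?case using rp by simp
  qed
  from step[of K] have rK: "run K \<in> perms n" and gK: "f (run K) - 4 * OPT \<le> q ^ K * (f \<pi> - 4 * OPT)" by auto
  have qK0: "0 \<le> q ^ K" using q0 by simp
  have fin_bound: "f (run K) \<le> (4 + \<epsilon>) * OPT"
  proof (cases "f \<pi> - 4 * OPT \<le> 0")
    case True
    then have "q ^ K * (f \<pi> - 4 * OPT) \<le> 0" using qK0 by (simp add: mult_nonneg_nonpos)
    then show ?thesis using gK OPT0 as(8) by (simp add: algebra_simps) (smt (verit) mult_nonneg_nonneg)
  next
    case False
    then have pos: "f \<pi> > 4 * OPT" by simp
    have Opos: "OPT > 0"
    proof (rule ccontr)
      assume "\<not> OPT > 0"
      then have "OPT = 0" using OPT0 by simp
      then show False using pos pi(2) by simp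
    qed
    have g0: "f \<pi> - 4 * OPT \<le> d * OPT" using pi(2) OPT0 by simp
    have qd: "q ^ K * d \<le> \<epsilon>"
    proof (cases "d \<le> \<epsilon>")
      case True
      have "d > 0" using pos pi(2) OPT0 Opos by (smt (verit) mult_nonpos_nonneg)
      have "q ^ K \<le> 1" using q0 by (simp add: power_le_one)
      then have "q ^ K * d \<le> 1 * d" using \<open>d > 0\<close> by (intro mult_right_mono) auto
      then show ?thesis using True by simp
    next
      case False
      then show ?thesis unfolding q_def K_def using qpow_bound[OF as(1) as(8)] by simp
    qed
    have "f (run K) - 4 * OPT \<le> q ^ K * (d * OPT)" using gK g0 qK0 by (smt (verit) mult_left_mono)
    also have "\<dots> = (q ^ K * d) * OPT" by simp
    also have "\<dots> \<le> \<epsilon> * OPT" using qd Opos by (intro mult_right_mono) auto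
    finally show ?thesis by (simp add: algebra_simps)
  qed
  show ?thesis unfolding is_approx_def using rK fin_bound unfolding OPT_def f_def K_def ceq by simp
qed

end
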